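(* Let $t$ be a positive integer and let $M$ be a matroid with the $(t,2t)$-property. If $M$ has a $t$-echidna $(S_1,\ldots, S_n)$ with $n\geq3t-1$, then $(S_1,\ldots, S_n)$ is also a $t$-coechidna of $M$.
   Context: A matroid $M$ has the $(t,2t)$-property if every $t$-element subset of $E(M)$ is contained in both a $2t$-element circuit and a $2t$-element cocircuit of $M$. A $t$-echidna of order $n$ of $M$ is a partition $(S_1,\ldots,S_n)$ of a subset of $E(M)$ such that $|S_i|=2$ for all $i\in\{1,\dots,n\}$, and $\bigcup_{i\in I}S_i$ is a circuit of $M$ for every $I\subseteq\{1,\dots,n\}$ with $|I|=t$. A $t$-coechidna of $M$ is a $t$-echidna of the dual matroid $M^*$ (i.e. the unions of any $t$ of the $S_i$ are cocircuits of $M$). *)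

theory Defs
  imports Main
begin

definition matroid :: "'a set \<Rightarrow> ('a set \<Rightarrow> bool) \<Rightarrow> bool" where
  "matroid E indep \<longleftrightarrow>
     finite E \<and> indep {} \<and>
     (\<forall>X. indep X \<longrightarrow> X \<subseteq> E) \<and>
     (\<forall>X Y. indep Y \<and> X \<subseteq> Y \<longrightarrow> indep X) \<and>
     (\<forall>X Y. indep X \<and> indep Y \<and> card X < card Y \<longrightarrow> (\<exists>y\<in>Y - X. indep (insert y X)))"

definition basis :: "'a set \<Rightarrow> ('a set \<Rightarrow> bool) \<Rightarrow> 'a set \<Rightarrow> bool" where
  "basis E indep B \<longleftrightarrow> B \<subseteq> E \<and> indep B \<and> (\<forall>X. X \<subseteq> E \<and> indep X \<and> B \<subseteq> X \<longrightarrow> X = B)"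

definition circuit :: "'a set \<Rightarrow> ('a set \<Rightarrow> bool) \<Rightarrow> 'a set \<Rightarrow> bool" where
  "circuit E indep C \<longleftrightarrow> C \<subseteq> E \<and> \<not> indep C \<and> (\<forall>X. X \<subset> C \<longrightarrow> indep X)"

definition dual_indep :: "'a set \<Rightarrow> ('a set \<Rightarrow> bool) \<Rightarrow> 'a set \<Rightarrow> bool" where
  "dual_indep E indep X \<longleftrightarrow> X \<subseteq> E \<and> (\<exists>B. basis E indep B \<and> X \<inter> B = {})"

definition cocircuit :: "'a set \<Rightarrow> ('a set \<Rightarrow> bool) \<Rightarrow> 'a set \<Rightarrow> bool" where
  "cocircuit E indep D \<longleftrightarrow> circuit E (dual_indep E indep) D"

definition t_2t_property :: "'a set \<Rightarrow> ('a set \<Rightarrow> bool) \<Rightarrow> nat \<Rightarrow> bool" where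
  "t_2t_property E indep t \<longleftrightarrow>
     (\<forall>X. X \<subseteq> E \<and> card X = t \<longrightarrow>
        (\<exists>C. circuit E indep C \<and> X \<subseteq> C \<and> card C = 2 * t) \<and>
        (\<exists>D. cocircuit E indep D \<and> X \<subseteq> D \<and> card D = 2 * t))"

definition echidna :: "'a set \<Rightarrow> ('a set \<Rightarrow> bool) \<Rightarrow> nat \<Rightarrow> (nat \<Rightarrow> 'a set) \<Rightarrow> nat \<Rightarrow> bool" where
  "echidna E indep t S n \<longleftrightarrow>
     (\<forall>i<n. S i \<subseteq> E \<and> card (S i) = 2) \<and>
     (\<forall>i<n. \<forall>j<n. i \<noteq> j \<longrightarrow> S i \<inter> S j = {}) \<and>
     (\<forall>I. I \<subseteq> {..<n} \<and> card I = t \<longrightarrow> circuit E indep (\<Union>i\<in>I. S i))"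

definition coechidna :: "'a set \<Rightarrow> ('a set \<Rightarrow> bool) \<Rightarrow> nat \<Rightarrow> (nat \<Rightarrow> 'a set) \<Rightarrow> nat \<Rightarrow> bool" where
  "coechidna E indep t S n \<longleftrightarrow> echidna E (dual_indep E indep) t S n"

end

theory Submission
  imports Defs
begin

lemma basis_card_ge:
  assumes M: "matroid E indep" and B: "basis E indep B" and Y: "indep Y"
  shows "card Y \<le> card B"
proof (rule ccontr)
  have aug: "\<And>X Y. indep X \<Longrightarrow> indep Y \<Longrightarrow> card X < card Y \<Longrightarrow> \<exists>y\<in>Y - X. indep (insert y X)"
    using M unfolding matroid_def by blast
  have ind_E: "\<And>X. indep X \<Longrightarrow> X \<subseteq> E" using M unfolding matroid_def by blast
  have Bm: "\<And>X. X \<subseteq> E \<Longrightarrow> indep X \<Longrightarrow> B \<subseteq> X \<Longrightarrow> X = B" "indep B"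
    using B unfolding basis_def by blast+
  assume "\<not> card Y \<le> card B"
  hence "card B < card Y" by simp
  then obtain y where y: "y \<in> Y - B" "indep (insert y B)"
    using aug[OF Bm(2) Y] by blast
  have "insert y B = B" using Bm(1)[OF ind_E[OF y(2)] y(2)] by blast
  thus False using y(1) by blast
qed

lemma orth:
  assumes M: "matroid E indep" and C: "circuit E indep C" and D: "cocircuit E indep D"
    and e: "C \<inter> D = {e}"
  shows False
proof -
  have fin: "finite E" using M by (simp add: matroid_def)
  have ind_sub: "\<And>X Y. indep Y \<Longrightarrow> X \<subseteq> Y \<Longrightarrow> indep X" using M unfolding matroid_def by blast
  have ind_E: "\<And>X. indep X \<Longrightarrow> X \<subseteq> E" using M unfolding matroid_def by blast
  have aug: "\<And>X Y. indep X \<Longrightarrow> indep Y \<Longrightarrow> card X < card Y \<Longrightarrow> \<exists>y\<in>Y - X. indep (insert y X)"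
    using M unfolding matroid_def by blast
  have Dc: "D \<subseteq> E" "\<not> dual_indep E indep D" "\<And>X. X \<subset> D \<Longrightarrow> dual_indep E indep X"
    using D by (auto simp: cocircuit_def circuit_def)
  have eD: "e \<in> D" "e \<in> C" using e by auto
  have "dual_indep E indep (D - {e})" using Dc(3) eD by blast
  then obtain B where B: "basis E indep B" "(D - {e}) \<inter> B = {}" by (auto simp: dual_indep_def)
  have BE: "B \<subseteq> E" "indep B" using B by (auto simp: basis_def)
  have CE: "C \<subseteq> E" "\<not> indep C" "\<And>X. X \<subset> C \<Longrightarrow> indep X" using C by (auto simp: circuit_def)
  define P where "P J \<longleftrightarrow> indep J \<and> C - {e} \<subseteq> J \<and> J \<subseteq> E - D" for J
  have "C - {e} \<subset> C" using eD by blast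
  hence P0: "P (C - {e})" unfolding P_def using CE e by auto
  have "\<forall>y. P y \<longrightarrow> card y < card E + 1"
  proof (intro allI impI)
    fix y assume "P y"
    hence "y \<subseteq> E" unfolding P_def by blast
    hence "card y \<le> card E" using fin by (rule card_mono[rotated])
    thus "card y < card E + 1" by simp
  qed
  then obtain J where J: "P J" and Jmax: "\<And>J'. P J' \<Longrightarrow> card J' \<le> card J"
    using ex_has_greatest_nat[of P "C - {e}" card "card E + 1"] P0 by blast
  have JE: "indep J" "C - {e} \<subseteq> J" "J \<subseteq> E - D" using J by (auto simp: P_def)
  have finJ: "finite J" using JE fin by (meson Diff_subset finite_subset)
  have le: "card J \<le> card B" using basis_card_ge[OF M B(1) JE(1)] .
  have ge: "\<not> card J < card B"
  proof
    assume "card J < card B"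
    then obtain y where y: "y \<in> B - J" "indep (insert y J)" using aug JE(1) BE(2) by blast
    show False
    proof (cases "y = e")
      case True
      have "C \<subseteq> insert y J" using JE(2) True by blast
      thus False using ind_sub[OF y(2)] CE(2) by blast
    next
      case False
      have "y \<in> E - D" using y(1) B(2) BE(1) False by blast
      hence "P (insert y J)" using y JE unfolding P_def by blast
      hence "card (insert y J) \<le> card J" by (rule Jmax)
      thus False using finJ y(1) by simp
    qed
  qed
  have "basis E indep J"
    unfolding basis_def
  proof (intro conjI allI impI)
    show "J \<subseteq> E" using JE by blast
    show "indep J" using JE by blast
    fix X assume X: "X \<subseteq> E \<and> indep X \<and> J \<subseteq> X"
    show "X = J"
    proof (rule ccontr)
      assume "X \<noteq> J"
      hence "J \<subset> X" using X by blast
      hence "card J < card X" using X fin by (meson psubset_card_mono finite_subset)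
      thus False using basis_card_ge[OF M B(1), of X] X le ge by simp
    qed
  qed
  hence "dual_indep E indep D" using JE(3) Dc(1) unfolding dual_indep_def by blast
  thus False using Dc(2) by blast
qed

lemma main_cocircuit:
  fixes E :: "'a set" and indep :: "'a set \<Rightarrow> bool" and t n :: nat and S :: "nat \<Rightarrow> 'a set"
  assumes M: "matroid E indep"
    and tpos: "t > 0"
    and P: "t_2t_property E indep t"
    and Sc: "\<And>i. i < n \<Longrightarrow> S i \<subseteq> E \<and> card (S i) = 2"
    and Sd: "\<And>i j. i < n \<Longrightarrow> j < n \<Longrightarrow> i \<noteq> j \<Longrightarrow> S i \<inter> S j = {}"
    and Scirc: "\<And>I. I \<subseteq> {..<n} \<Longrightarrow> card I = t \<Longrightarrow> circuit E indep (\<Union>i\<in>I. S i)"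
    and nt: "n \<ge> 3 * t - 1"
    and I: "I \<subseteq> {..<n}" "card I = t"
  shows "cocircuit E indep (\<Union>i\<in>I. S i)"
proof -
  have fin: "finite E" using M by (simp add: matroid_def)
  have finI: "finite I" using I(1) finite_subset by blast
  define x where "x i = (SOME y. y \<in> S i)" for i
  have finS: "finite (S i)" if "i < n" for i using Sc[OF that] card.infinite by fastforce
  have xS: "x i \<in> S i" if "i < n" for i
  proof -
    have "S i \<noteq> {}" using Sc[OF that] by auto
    thus ?thesis unfolding x_def by (simp add: some_in_eq)
  qed
  have injx: "inj_on x I"
  proof (rule inj_onI)
    fix i j assume ij: "i \<in> I" "j \<in> I" "x i = x j"
    have n: "i < n" "j < n" using ij I(1) by auto
    show "i = j"
    proof (rule ccontr)
      assume "i \<noteq> j"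
      hence "S i \<inter> S j = {}" using Sd[OF n] by simp
      moreover have "x i \<in> S i \<inter> S j" using xS[OF n(1)] xS[OF n(2)] ij(3) by simp
      ultimately show False by simp
    qed
  qed
  have cX: "card (x ` I) = t" using card_image[OF injx] I(2) by simp
  have XE: "x ` I \<subseteq> E"
  proof
    fix y assume "y \<in> x ` I"
    then obtain i where i: "i \<in> I" "y = x i" by blast
    have iN: "i < n" using i I(1) by auto
    thus "y \<in> E" using xS[OF iN] Sc[OF iN] i(2) by blast
  qed
  have "\<exists>D. cocircuit E indep D \<and> x ` I \<subseteq> D \<and> card D = 2 * t"
    using P XE cX unfolding t_2t_property_def by simp
  then obtain D where D: "cocircuit E indep D" "x ` I \<subseteq> D" "card D = 2 * t"
    by blast
  have DE: "D \<subseteq> E" using D(1) by (simp add: cocircuit_def circuit_def)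
  have finD: "finite D" using DE fin finite_subset by blast
  have sub: "S i \<subseteq> D" if iI: "i \<in> I" for i
  proof (rule ccontr)
    assume nsub: "\<not> S i \<subseteq> D"
    have iN: "i < n" using iI I(1) by blast
    have xiD: "x i \<in> D" using D(2) iI by blast
    have SiD: "S i \<inter> D = {x i}"
    proof (rule ccontr)
      assume "S i \<inter> D \<noteq> {x i}"
      then obtain z where z: "z \<in> S i \<inter> D" "z \<noteq> x i" using xS[OF iN] xiD by blast
      have "{z, x i} \<subseteq> S i \<inter> D" using z xS[OF iN] xiD by blast
      hence "card {z, x i} \<le> card (S i \<inter> D)" using finS[OF iN] by (meson card_mono finite_Int)
      hence "card (S i) \<le> card (S i \<inter> D)" using z(2) Sc[OF iN] by simp
      hence "S i \<inter> D = S i" using finS[OF iN] by (meson Int_lower1 card_seteq)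
      thus False using nsub by blast
    qed
    define L where "L = {j \<in> {..<n} - {i}. S j \<inter> D \<noteq> {}}"
    define K where "K = {j \<in> {..<n} - {i}. S j \<inter> D = {}}"
    define f where "f j = (SOME z. z \<in> S j \<inter> D)" for j
    have fL: "f j \<in> S j \<inter> D" if "j \<in> L" for j
    proof -
      have "S j \<inter> D \<noteq> {}" using that unfolding L_def by simp
      hence "\<exists>z. z \<in> S j \<inter> D" by blast
      thus ?thesis unfolding f_def by (rule someI_ex)
    qed
    have injf: "inj_on f L"
    proof (rule inj_onI)
      fix a b assume ab: "a \<in> L" "b \<in> L" "f a = f b"
      have n: "a < n" "b < n" using ab unfolding L_def by auto
      show "a = b"
      proof (rule ccontr)
        assume "a \<noteq> b"
        hence "S a \<inter> S b = {}" using Sd[OF n] by simp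
        moreover have "f a \<in> S a \<inter> S b" using fL[OF ab(1)] fL[OF ab(2)] ab(3) by simp
        ultimately show False by simp
      qed
    qed
    have fsub: "f ` L \<subseteq> D - {x i}"
    proof
      fix y assume "y \<in> f ` L"
      then obtain j where j: "j \<in> L" "y = f j" by blast
      have jn: "j < n" "j \<noteq> i" using j(1) unfolding L_def by auto
      have "S j \<inter> S i = {}" using Sd[OF jn(1) iN jn(2)] .
      moreover have yS: "y \<in> S j" "y \<in> D" using fL[OF j(1)] j(2) by simp_all
      moreover have "x i \<in> S i" using xS[OF iN] .
      ultimately have "y \<noteq> x i" by auto
      thus "y \<in> D - {x i}" using yS by simp
    qed
    have "card L = card (f ` L)" using card_image[OF injf] by simp
    also have "\<dots> \<le> card (D - {x i})" using fsub finD by (meson card_mono finite_Diff)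
    also have "\<dots> = 2 * t - 1" using D(3) xiD finD by simp
    finally have cL: "card L \<le> 2 * t - 1" .
    have "K \<union> L = {..<n} - {i}" "K \<inter> L = {}" unfolding K_def L_def by auto
    moreover have finKL: "finite K" "finite L" unfolding K_def L_def by auto
    ultimately have "card K + card L = card ({..<n} - {i})"
      using card_Un_disjoint[of K L] by simp
    also have "\<dots> = n - 1" using iN by simp
    finally have "card K + card L = n - 1" .
    hence cK: "card K \<ge> t - 1" using cL nt tpos by linarith
    obtain K' where K': "K' \<subseteq> K" "card K' = t - 1" using obtain_subset_with_card_n[OF cK] by blast
    have iK': "i \<notin> K'" using K' unfolding K_def by blast
    have finK': "finite K'" using K'(1) finKL(1) by (rule finite_subset)
    have cJ: "card (insert i K') = t" using iK' finK' K'(2) tpos by simp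
    have JN: "insert i K' \<subseteq> {..<n}" using iN K'(1) unfolding K_def by blast
    have C: "circuit E indep (\<Union>j\<in>insert i K'. S j)" using Scirc[OF JN cJ] .
    have "(\<Union>j\<in>insert i K'. S j) \<inter> D = {x i}" using SiD K'(1) unfolding K_def by blast
    thus False using orth[OF M C D(1)] by blast
  qed
  have "card (\<Union>i\<in>I. S i) = (\<Sum>i\<in>I. card (S i))"
  proof (rule card_UN_disjoint[OF finI])
    show "\<forall>i\<in>I. finite (S i)" using finS I(1) by auto
    show "\<forall>i\<in>I. \<forall>j\<in>I. i \<noteq> j \<longrightarrow> S i \<inter> S j = {}"
    proof (intro ballI impI)
      fix i j assume "i \<in> I" "j \<in> I" "i \<noteq> j"
      thus "S i \<inter> S j = {}" using Sd[of i j] I(1) by auto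
    qed
  qed
  also have "\<dots> = (\<Sum>i\<in>I. 2)" using Sc I(1) by (intro sum.cong) auto
  also have "\<dots> = card D" using I(2) D(3) by simp
  finally have cU: "card (\<Union>i\<in>I. S i) = card D" .
  have "(\<Union>i\<in>I. S i) \<subseteq> D" using sub by blast
  hence "(\<Union>i\<in>I. S i) = D" using card_seteq[OF finD] cU by simp
  thus ?thesis using D(1) by simp
qed

theorem lemma4p3:
  fixes E :: "'a set" and indep :: "'a set \<Rightarrow> bool" and t n :: nat and S :: "nat \<Rightarrow> 'a set"
  assumes "matroid E indep"
    and "t > 0"
    and "t_2t_property E indep t"
    and "echidna E indep t S n"
    and "n \<ge> 3 * t - 1"
  shows "coechidna E indep t S n"
proof -
  have e: "\<And>i. i < n \<Longrightarrow> S i \<subseteq> E \<and> card (S i) = 2"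
    "\<And>i j. i < n \<Longrightarrow> j < n \<Longrightarrow> i \<noteq> j \<Longrightarrow> S i \<inter> S j = {}"
    "\<And>I. I \<subseteq> {..<n} \<Longrightarrow> card I = t \<Longrightarrow> circuit E indep (\<Union>i\<in>I. S i)"
    using assms(4) unfolding echidna_def by blast+
  show ?thesis
    unfolding coechidna_def echidna_def
  proof (intro conjI allI impI)
    fix I assume "I \<subseteq> {..<n} \<and> card I = t"
    thus "circuit E (dual_indep E indep) (\<Union>i\<in>I. S i)"
      using main_cocircuit[OF assms(1,2,3) e assms(5)] unfolding cocircuit_def by blast
  qed (use e in auto)
qed

end
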